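(* Let $l,t,s,x,n$ be integers with $2\leq l\leq t$, $s\geq l+1$, $n\geq 2s+1$, $s\geq x\geq l$ and $n\geq x+(t-1)\binom{x}{l}+2(s-x)+1$. Let $X$ be a $K_{1,l}$-free graph on $x$ vertices with $e(X)=ex(x,K_{1,l})$, and let $S$ be a $K_{l,t}$-free graph on $2(s-x)+1$ vertices with $e(S)=ex(2(s-x)+1,K_{l,t})$, with $V(X)\cap V(S)=\emptyset$. Build a graph $G$ as follows: start from the disjoint union of $X$ and $S$; for each $l$-subset $F\subseteq V(X)$ add $t-1$ new vertices $v_{F,1},\ldots,v_{F,t-1}$, each joined to every vertex of $F$; fix an $(l-1)$-subset $F_0\subseteq V(X)$; add a set $U$ of $n-x-(t-1)\binom{x}{l}-2(s-x)-1$ new vertices, each joined to every vertex of $F_0$; and join every vertex of $S$ to every vertex of $F_0$. Call the resulting $n$-vertex graph $G_1^x$; and let $G_2^x$ be the graph obtained from $G_1^x$ by deleting all edges between $V(S)$ and $V(X)$. (i) If $2(s-x)+1\leq t$, then $G_1^x$ is $\{K_{l,t},M_{s+1}\}$-free. (ii) If $2(s-x)+1\geq t+1$, then $G_2^x$ is $\{K_{l,t},M_{s+1}\}$-free.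
   Context: All graphs are finite and simple. A graph is $\mathscr{F}$-free if it contains no member of $\mathscr{F}$ as a subgraph; $ex(m,F)$ is the maximum number of edges of an $m$-vertex $F$-free graph. $K_{a,b}$ is the complete bipartite graph with parts of sizes $a,b$; $M_{s+1}$ is the matching of $s+1$ pairwise disjoint edges. *)

theory Defs
  imports Main
begin

definition graph :: "'a set \<Rightarrow> 'a set set \<Rightarrow> bool" where
  "graph V E \<longleftrightarrow> finite V \<and> (\<forall>e\<in>E. e \<subseteq> V \<and> card e = 2)"

definition has_Kab :: "'a set \<Rightarrow> 'a set set \<Rightarrow> nat \<Rightarrow> nat \<Rightarrow> bool" where
  "has_Kab V E a b \<longleftrightarrow> (\<exists>A B. A \<subseteq> V \<and> B \<subseteq> V \<and> A \<inter> B = {} \<and>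
      card A = a \<and> card B = b \<and> (\<forall>u\<in>A. \<forall>w\<in>B. {u, w} \<in> E))"

definition has_matching :: "'a set set \<Rightarrow> nat \<Rightarrow> bool" where
  "has_matching E k \<longleftrightarrow> (\<exists>M. M \<subseteq> E \<and> finite M \<and> card M = k \<and> pairwise disjnt M)"

text \<open>ex(m, K_{a,b}): maximum number of edges of an m-vertex K_{a,b}-free graph
  (vertex set taken to be {0..<m}; the quantity is isomorphism invariant).\<close>
definition ex_Kab :: "nat \<Rightarrow> nat \<Rightarrow> nat \<Rightarrow> nat" where
  "ex_Kab m a b = Max {card E | E. graph {..<m} E \<and> \<not> has_Kab {..<m::nat} E a b}"

text \<open>Vertices of the constructed graph: old vertices (of X and S), new vertices v_{F,i},
  and the vertices of U.\<close>
datatype 'a vtx = Old 'a | New "'a set" nat | UV nat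

definition G1_V :: "'a set \<Rightarrow> 'a set \<Rightarrow> nat \<Rightarrow> nat \<Rightarrow> nat \<Rightarrow> 'a vtx set" where
  "G1_V VX VS l t u =
     Old ` (VX \<union> VS)
     \<union> {New F i | F i. F \<subseteq> VX \<and> card F = l \<and> 1 \<le> i \<and> i \<le> t - 1}
     \<union> {UV j | j. j < u}"

definition G1_E :: "'a set \<Rightarrow> 'a set set \<Rightarrow> 'a set \<Rightarrow> 'a set set \<Rightarrow> 'a set
                    \<Rightarrow> nat \<Rightarrow> nat \<Rightarrow> nat \<Rightarrow> 'a vtx set set" where
  "G1_E VX EdX VS EdS F0 l t u =
     (\<lambda>e. Old ` e) ` (EdX \<union> EdS)
     \<union> {{New F i, Old v} | F i v. F \<subseteq> VX \<and> card F = l \<and> 1 \<le> i \<and> i \<le> t - 1 \<and> v \<in> F}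
     \<union> {{UV j, Old v} | j v. j < u \<and> v \<in> F0}
     \<union> {{Old w, Old v} | w v. w \<in> VS \<and> v \<in> F0}"

definition G2_E :: "'a set \<Rightarrow> 'a set set \<Rightarrow> 'a set \<Rightarrow> 'a set set \<Rightarrow> 'a set
                    \<Rightarrow> nat \<Rightarrow> nat \<Rightarrow> nat \<Rightarrow> 'a vtx set set" where
  "G2_E VX EdX VS EdS F0 l t u =
     G1_E VX EdX VS EdS F0 l t u - {{Old w, Old v} | w v. w \<in> VS \<and> v \<in> VX}"

end

theory Submission
  imports Defs
begin


lemma P1_G1:
  "{New F i, w} \<in> G1_E VX EdX VS EdS F0 l t u \<Longrightarrow> F \<subseteq> VX \<and> card F = l \<and> (\<exists>v\<in>F. w = Old v)"
  unfolding G1_E_def by (auto simp: doubleton_eq_iff)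

lemma P2_G1:
  "{UV j, w} \<in> G1_E VX EdX VS EdS F0 l t u \<Longrightarrow> \<exists>v\<in>F0. w = Old v"
  unfolding G1_E_def by (auto simp: doubleton_eq_iff)

lemma P3_G1:
  assumes "graph VS EdS" "VX \<inter> VS = {}" "{Old a, Old b} \<in> G1_E VX EdX VS EdS F0 l t u" "a \<in> VX"
  shows "{a,b} \<in> EdX \<or> (a \<in> F0 \<and> b \<in> VS)"
proof -
  have inj: "inj Old" by (simp add: inj_def)
  have "Old ` {a,b} = {Old a, Old b}" by simp
  then have img: "\<And>e. Old ` e = {Old a, Old b} \<Longrightarrow> e = {a,b}"
    by (metis inj inj_image_eq_iff)
  from assms(3) show ?thesis unfolding G1_E_def
  proof (elim UnE)
    assume "{Old a, Old b} \<in> (\<lambda>e. Old ` e) ` (EdX \<union> EdS)"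
    then obtain e where e: "e \<in> EdX \<union> EdS" "Old ` e = {Old a, Old b}" by auto
    then have "e = {a,b}" using img by blast
    moreover have "e \<notin> EdS" using assms(1,2,4) \<open>e = {a,b}\<close> unfolding graph_def by blast
    ultimately show ?thesis using e by auto
  qed (use assms(2,4) in \<open>auto simp: doubleton_eq_iff\<close>)
qed

lemma G2_sub: "G2_E VX EdX VS EdS F0 l t u \<subseteq> G1_E VX EdX VS EdS F0 l t u"
  unfolding G2_E_def by auto

lemma P3_G2:
  assumes "graph VS EdS" "VX \<inter> VS = {}" "{Old a, Old b} \<in> G2_E VX EdX VS EdS F0 l t u" "a \<in> VX"
  shows "{a,b} \<in> EdX"
proof -
  have "{a,b} \<in> EdX \<or> (a \<in> F0 \<and> b \<in> VS)" using P3_G1[OF assms(1,2) _ assms(4)] assms(3) G2_sub by blast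
  moreover have "\<not> (a \<in> F0 \<and> b \<in> VS)"
  proof
    assume "a \<in> F0 \<and> b \<in> VS"
    then have "{Old a, Old b} \<in> {{Old w, Old v} | w v. w \<in> VS \<and> v \<in> VX}"
      using assms(4) by (auto simp: insert_commute)
    then show False using assms(3) unfolding G2_E_def by blast
  qed
  ultimately show ?thesis by blast
qed

lemma P4_G2:
  assumes "graph VX EdX" "F0 \<subseteq> VX" "VX \<inter> VS = {}" "{Old a, Old b} \<in> G2_E VX EdX VS EdS F0 l t u" "a \<in> VS"
  shows "{a,b} \<in> EdS"
proof -
  have inj: "inj Old" by (simp add: inj_def)
  have "Old ` {a,b} = {Old a, Old b}" by simp
  then have img: "\<And>e. Old ` e = {Old a, Old b} \<Longrightarrow> e = {a,b}"
    by (metis inj inj_image_eq_iff)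
  have nr: "{Old a, Old b} \<notin> {{Old w, Old v} | w v. w \<in> VS \<and> v \<in> VX}"
    using assms(4) unfolding G2_E_def by blast
  have "{Old a, Old b} \<in> G1_E VX EdX VS EdS F0 l t u" using assms(4) G2_sub by blast
  then show ?thesis unfolding G1_E_def
  proof (elim UnE)
    assume "{Old a, Old b} \<in> (\<lambda>e. Old ` e) ` (EdX \<union> EdS)"
    then obtain e where e: "e \<in> EdX \<union> EdS" "Old ` e = {Old a, Old b}" by auto
    then have "e = {a,b}" using img by blast
    moreover have "e \<notin> EdX" using assms(1,3,5) \<open>e = {a,b}\<close> unfolding graph_def by blast
    ultimately show ?thesis using e by auto
  next
    assume "{Old a, Old b} \<in> {{Old w, Old v} | w v. w \<in> VS \<and> v \<in> F0}"
    then obtain w v where "{Old a, Old b} = {Old w, Old v}" "w \<in> VS" "v \<in> F0" by blast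
    then show ?thesis using nr assms(2,3,5) by (auto simp: doubleton_eq_iff)
  qed (auto simp: doubleton_eq_iff)
qed



lemma Xdeg:
  assumes "graph VX EdX" "\<not> has_Kab VX EdX 1 l" "1 \<le> l"
  shows "finite {w. {v,w} \<in> EdX}" "card {w. {v,w} \<in> EdX} < l"
proof -
  let ?N = "{w. {v,w} \<in> EdX}"
  have sub: "?N \<subseteq> VX" using assms(1) unfolding graph_def by blast
  then show fin: "finite ?N" using assms(1) unfolding graph_def by (meson finite_subset)
  show "card ?N < l"
  proof (rule ccontr)
    assume "\<not> card ?N < l"
    then obtain B where B: "B \<subseteq> ?N" "card B = l" by (meson not_less obtain_subset_with_card_n)
    then obtain w where "w \<in> B" using assms(3) by fastforce
    then have "{v,w} \<in> EdX" using B by blast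
    then have vX: "v \<in> VX" using assms(1) unfolding graph_def by blast
    have vn: "v \<notin> B"
    proof
      assume "v \<in> B"
      then have "{v} \<in> EdX" using B by auto
      then show False using assms(1) unfolding graph_def by fastforce
    qed
    have "has_Kab VX EdX 1 l" unfolding has_Kab_def
      by (rule exI[of _ "{v}"], rule exI[of _ B]) (use B sub vX vn in auto)
    then show False using assms(2) by blast
  qed
qed

lemma CN:
  assumes gX: "graph VX EdX" and nX: "\<not> has_Kab VX EdX 1 l" and disj: "VX \<inter> VS = {}"
    and F0: "F0 \<subseteq> VX" "card F0 = l - 1" and l: "2 \<le> l"
    and P1: "\<And>F i w. {New F i, w} \<in> E \<Longrightarrow> F \<subseteq> VX \<and> card F = l \<and> (\<exists>v\<in>F. w = Old v)"
    and P2: "\<And>j w. {UV j, w} \<in> E \<Longrightarrow> \<exists>v\<in>F0. w = Old v"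
    and P3: "\<And>a b. {Old a, Old b} \<in> E \<Longrightarrow> a \<in> VX \<Longrightarrow> {a,b} \<in> EdX \<or> (a \<in> F0 \<and> b \<in> VS)"
    and W: "W \<subseteq> G1_V VX VS l t u" and F: "F \<subseteq> VX" "card F = l"
    and adj: "\<forall>w\<in>W. \<forall>f\<in>F. {w, Old f} \<in> E" and dW: "W \<inter> Old ` F = {}"
  shows "W \<subseteq> New F ` {1..t-1}"
proof
  have finX: "finite VX" using gX unfolding graph_def by blast
  have finF0: "finite F0" using F0 finX finite_subset by blast
  have notF0: "\<not> F \<subseteq> F0"
  proof
    assume "F \<subseteq> F0"
    then have "card F \<le> card F0" using finF0 card_mono by blast
    then show False using F F0 l by simp
  qed
  fix w assume wW: "w \<in> W"
  then have wV: "w \<in> G1_V VX VS l t u" using W by blast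
  show "w \<in> New F ` {1..t-1}"
  proof (cases w)
    case (Old v)
    have e: "\<And>f. f \<in> F \<Longrightarrow> {Old f, Old v} \<in> E" using adj wW Old by (metis insert_commute)
    have v: "v \<in> VX \<union> VS" using wV Old unfolding G1_V_def by auto
    show ?thesis
    proof (cases "v \<in> VS")
      case True
      have "F \<subseteq> F0"
      proof
        fix f assume f: "f \<in> F"
        then have "{f,v} \<in> EdX \<or> (f \<in> F0 \<and> v \<in> VS)" using P3[OF e] F by blast
        moreover have "{f,v} \<notin> EdX" using gX True disj unfolding graph_def by blast
        ultimately show "f \<in> F0" by blast
      qed
      then show ?thesis using notF0 by blast
    next
      case False
      then have vX: "v \<in> VX" using v by blast
      have "F \<subseteq> {w. {v,w} \<in> EdX}"
      proof
        fix f assume f: "f \<in> F"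
        then have "{f,v} \<in> EdX" using P3[OF e] F False by blast
        then show "f \<in> {w. {v,w} \<in> EdX}" by (simp add: insert_commute)
      qed
      then have "card F \<le> card {w. {v,w} \<in> EdX}" using Xdeg[OF gX nX] l card_mono by (metis one_le_numeral order.trans)
      moreover have "card {w. {v,w} \<in> EdX} < l" using Xdeg[OF gX nX] l by simp
      ultimately show ?thesis using F by simp
    qed
  next
    case (New F' i)
    have i: "1 \<le> i \<and> i \<le> t - 1" using wV New unfolding G1_V_def by auto
    have "F \<subseteq> F'"
    proof
      fix f assume "f \<in> F"
      then have "{New F' i, Old f} \<in> E" using adj wW New by blast
      then show "f \<in> F'" using P1 by fastforce
    qed
    moreover obtain f where "f \<in> F" using F l by fastforce
    then have "{New F' i, Old f} \<in> E" using adj wW New by blast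
    then have F': "F' \<subseteq> VX" "card F' = l" using P1 by blast+
    ultimately have "F = F'" using F finX by (metis card_subset_eq finite_subset)
    then show ?thesis using New i by auto
  next
    case (UV j)
    have "F \<subseteq> F0"
    proof
      fix f assume "f \<in> F"
      then have "{UV j, Old f} \<in> E" using adj wW UV by blast
      then show "f \<in> F0" using P2 by fastforce
    qed
    then show ?thesis using notF0 by blast
  qed
qed



lemma noNewUV:
  assumes gX: "graph VX EdX" and nX: "\<not> has_Kab VX EdX 1 l" and disj: "VX \<inter> VS = {}"
    and F0: "F0 \<subseteq> VX" "card F0 = l - 1" and l: "2 \<le> l" "l \<le> t"
    and P1: "\<And>F i w. {New F i, w} \<in> E \<Longrightarrow> F \<subseteq> VX \<and> card F = l \<and> (\<exists>v\<in>F. w = Old v)"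
    and P2: "\<And>j w. {UV j, w} \<in> E \<Longrightarrow> \<exists>v\<in>F0. w = Old v"
    and P3: "\<And>a b. {Old a, Old b} \<in> E \<Longrightarrow> a \<in> VX \<Longrightarrow> {a,b} \<in> EdX \<or> (a \<in> F0 \<and> b \<in> VS)"
    and AB: "A \<subseteq> G1_V VX VS l t u" "B \<subseteq> G1_V VX VS l t u" "A \<inter> B = {}" "card A = l" "card B = t"
       "\<forall>a\<in>A. \<forall>b\<in>B. {a,b} \<in> E"
  shows "A \<union> B \<subseteq> Old ` (VX \<union> VS)"
proof
  have inj: "inj Old" by (simp add: inj_def)
  have finX: "finite VX" using gX unfolding graph_def by blast
  have finF0: "finite F0" using F0 finX finite_subset by blast
  have cF0: "card (Old ` F0) = l - 1" using F0 inj by (metis card_image inj_on_subset subset_UNIV)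
  fix c assume c: "c \<in> A \<union> B"
  then have cV: "c \<in> G1_V VX VS l t u" using AB by blast
  show "c \<in> Old ` (VX \<union> VS)"
  proof (cases c)
    case (Old v)
    then show ?thesis using cV unfolding G1_V_def by auto
  next
    case (New F i)
    have nA: "c \<notin> A"
    proof
      assume cA: "c \<in> A"
      have BF: "B \<subseteq> Old ` F"
      proof
        fix b assume "b \<in> B"
        then have "{New F i, b} \<in> E" using AB cA New by blast
        then show "b \<in> Old ` F" using P1 by blast
      qed
      have cF: "\<exists>b. b \<in> B" using AB l by (metis all_not_in_conv card.empty not_numeral_le_zero order.trans)
      then obtain b where "b \<in> B" by blast
      then have "{New F i, b} \<in> E" using AB cA New by blast
      then have F: "F \<subseteq> VX" "card F = l" using P1 by blast+
      have finF: "finite F" using F finX finite_subset by blast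
      have cOF: "card (Old ` F) = l" using F inj by (metis card_image inj_on_subset subset_UNIV)
      have "B = Old ` F" using BF finF cOF AB l by (metis card_seteq finite_imageI)
      then have tl: "t = l" using AB cOF by simp
      have "A \<subseteq> New F ` {1..t-1}"
        apply (rule CN[where E=E and W=A and F=F and t=t and u=u and VX=VX and EdX=EdX and l=l and VS=VS and F0=F0])
        apply (fact gX nX disj F0 P1 P2 P3 AB F l)+
        using AB \<open>B = Old ` F\<close> by auto
      then have "card A \<le> card (New F ` {1..t-1})" by (simp add: card_mono)
      also have "\<dots> \<le> t - 1" using card_image_le[of "{1..t-1}" "New F"] by simp
      finally show False using AB tl l by simp
    qed
    have nB: "c \<notin> B"
    proof
      assume cB: "c \<in> B"
      have AF: "A \<subseteq> Old ` F"
      proof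
        fix a assume "a \<in> A"
        then have "{a, New F i} \<in> E" using AB cB New by blast
        then have "{New F i, a} \<in> E" by (metis insert_commute)
        then show "a \<in> Old ` F" using P1 by blast
      qed
      have "\<exists>a. a \<in> A" using AB l by (metis all_not_in_conv card.empty not_numeral_le_zero)
      then obtain a where "a \<in> A" by blast
      then have "{a, New F i} \<in> E" using AB cB New by blast
      then have "{New F i, a} \<in> E" by (metis insert_commute)
      then have F: "F \<subseteq> VX" "card F = l" using P1 by blast+
      have finF: "finite F" using F finX finite_subset by blast
      have cOF: "card (Old ` F) = l" using F inj by (metis card_image inj_on_subset subset_UNIV)
      have AeqF: "A = Old ` F" using AF finF cOF AB by (metis card_seteq finite_imageI order_refl)
      have "B \<subseteq> New F ` {1..t-1}"
        apply (rule CN[where E=E and W=B and F=F and t=t and u=u and VX=VX and EdX=EdX and l=l and VS=VS and F0=F0])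
        apply (fact gX nX disj F0 P1 P2 P3 AB F l)+
        using AB AeqF by (auto simp: insert_commute)
      then have "card B \<le> card (New F ` {1..t-1})" by (simp add: card_mono)
      also have "\<dots> \<le> t - 1" using card_image_le[of "{1..t-1}" "New F"] by simp
      finally show False using AB l by simp
    qed
    show ?thesis using nA nB c by blast
  next
    case (UV j)
    have nA: "c \<notin> A"
    proof
      assume cA: "c \<in> A"
      have "B \<subseteq> Old ` F0"
      proof
        fix b assume "b \<in> B"
        then have "{UV j, b} \<in> E" using AB cA UV by blast
        then show "b \<in> Old ` F0" using P2 by blast
      qed
      then have "card B \<le> l - 1" using cF0 finF0 by (metis card_mono finite_imageI)
      then show False using AB l by simp
    qed
    have nB: "c \<notin> B"
    proof
      assume cB: "c \<in> B"
      have "A \<subseteq> Old ` F0"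
      proof
        fix a assume "a \<in> A"
        then have "{UV j, a} \<in> E" using AB cB UV by (metis insert_commute)
        then show "a \<in> Old ` F0" using P2 by blast
      qed
      then have "card A \<le> l - 1" using cF0 finF0 by (metis card_mono finite_imageI)
      then show False using AB l by simp
    qed
    show ?thesis using nA nB c by blast
  qed
qed



lemma side:
  assumes gX: "graph VX EdX" and nX: "\<not> has_Kab VX EdX 1 l" and l: "2 \<le> l" "l \<le> k"
    and C: "C \<subseteq> Old ` (VX \<union> VS)" "card C = k"
    and adj: "\<And>b. Old b \<in> C \<Longrightarrow> {v, b} \<in> EdX"
  shows False
proof -
  have "C \<subseteq> Old ` {w. {v,w} \<in> EdX}" using C adj by blast
  then have "card C \<le> card (Old ` {w. {v,w} \<in> EdX})"
    using Xdeg(1)[OF gX nX] l by (metis card_mono finite_imageI one_le_numeral order.trans)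
  also have "\<dots> \<le> card {w. {v,w} \<in> EdX}" by (rule card_image_le) (use Xdeg(1)[OF gX nX] l in auto)
  also have "\<dots> < l" using Xdeg(2)[OF gX nX] l by auto
  finally show False using C l by simp
qed

lemma caseI:
  assumes gX: "graph VX EdX" and nX: "\<not> has_Kab VX EdX 1 l" and disj: "VX \<inter> VS = {}"
    and gS: "graph VS EdS"
    and F0: "F0 \<subseteq> VX" "card F0 = l - 1" and l: "2 \<le> l" "l \<le> t"
    and cS: "card VS \<le> t"
  shows "\<not> has_Kab (G1_V VX VS l t u) (G1_E VX EdX VS EdS F0 l t u) l t"
proof
  let ?E = "G1_E VX EdX VS EdS F0 l t u"
  assume "has_Kab (G1_V VX VS l t u) ?E l t"
  then obtain A B where AB: "A \<subseteq> G1_V VX VS l t u" "B \<subseteq> G1_V VX VS l t u" "A \<inter> B = {}" "card A = l" "card B = t"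
       "\<forall>a\<in>A. \<forall>b\<in>B. {a,b} \<in> ?E" unfolding has_Kab_def by blast
  have old: "A \<union> B \<subseteq> Old ` (VX \<union> VS)"
  proof -
    have p1: "\<And>F i w. {New F i, w} \<in> ?E \<Longrightarrow> F \<subseteq> VX \<and> card F = l \<and> (\<exists>v\<in>F. w = Old v)" by (rule P1_G1)
    have p2: "\<And>j w. {UV j, w} \<in> ?E \<Longrightarrow> \<exists>v\<in>F0. w = Old v" by (rule P2_G1)
    have p3: "\<And>a b. {Old a, Old b} \<in> ?E \<Longrightarrow> a \<in> VX \<Longrightarrow> {a,b} \<in> EdX \<or> (a \<in> F0 \<and> b \<in> VS)"
      by (rule P3_G1[OF gS disj])
    show ?thesis by (rule noNewUV[OF gX nX disj F0 l p1 p2 p3 AB])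
  qed
  have sub: "A \<union> B \<subseteq> Old ` (F0 \<union> VS)"
  proof
    fix c assume c: "c \<in> A \<union> B"
    then obtain v where v: "c = Old v" "v \<in> VX \<union> VS" using old by blast
    show "c \<in> Old ` (F0 \<union> VS)"
    proof (rule ccontr)
      assume "c \<notin> Old ` (F0 \<union> VS)"
      then have vX: "v \<in> VX" "v \<notin> F0" using v by auto
      show False
      proof (cases "c \<in> A")
        case True
        show False
        proof (rule side[OF gX nX l(1) l(2), of B VS v])
          show "B \<subseteq> Old ` (VX \<union> VS)" using old by blast
          show "card B = t" using AB by simp
          fix b assume "Old b \<in> B"
          then have "{Old v, Old b} \<in> ?E" using AB True v by blast
          then show "{v,b} \<in> EdX" using P3_G1[OF gS disj] vX by blast
        qed
      next
        case False
        then have cB: "c \<in> B" using c by blast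
        show False
        proof (rule side[OF gX nX l(1) order_refl, of A VS v])
          show "A \<subseteq> Old ` (VX \<union> VS)" using old by blast
          show "card A = l" using AB by simp
          fix b assume "Old b \<in> A"
          then have "{Old b, Old v} \<in> ?E" using AB cB v by blast
          then have "{Old v, Old b} \<in> ?E" by (metis insert_commute)
          then show "{v,b} \<in> EdX" using P3_G1[OF gS disj] vX by blast
        qed
      qed
    qed
  qed
  have finX: "finite VX" using gX unfolding graph_def by blast
  have finS: "finite VS" using gS unfolding graph_def by blast
  have finF0: "finite F0" using F0 finX finite_subset by blast
  have finAB: "finite A" "finite B" using AB l by (metis card.infinite not_numeral_le_zero order.trans)+
  have "l + t = card (A \<union> B)" using AB finAB by (simp add: card_Un_disjoint)
  also have "\<dots> \<le> card (Old ` (F0 \<union> VS))" using sub finF0 finS by (simp add: card_mono)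
  also have "\<dots> \<le> card (F0 \<union> VS)" using finF0 finS by (simp add: card_image_le)
  also have "\<dots> \<le> card F0 + card VS" by (rule card_Un_le)
  finally show False using F0 l cS by simp
qed

lemma caseII:
  assumes gX: "graph VX EdX" and nX: "\<not> has_Kab VX EdX 1 l" and disj: "VX \<inter> VS = {}"
    and gS: "graph VS EdS" and nS: "\<not> has_Kab VS EdS l t"
    and F0: "F0 \<subseteq> VX" "card F0 = l - 1" and l: "2 \<le> l" "l \<le> t"
  shows "\<not> has_Kab (G1_V VX VS l t u) (G2_E VX EdX VS EdS F0 l t u) l t"
proof
  let ?E = "G2_E VX EdX VS EdS F0 l t u"
  have inj: "inj Old" by (simp add: inj_def)
  assume "has_Kab (G1_V VX VS l t u) ?E l t"
  then obtain A B where AB: "A \<subseteq> G1_V VX VS l t u" "B \<subseteq> G1_V VX VS l t u" "A \<inter> B = {}" "card A = l" "card B = t"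
       "\<forall>a\<in>A. \<forall>b\<in>B. {a,b} \<in> ?E" unfolding has_Kab_def by blast
  have old: "A \<union> B \<subseteq> Old ` (VX \<union> VS)"
  proof -
    have p1: "\<And>F i w. {New F i, w} \<in> ?E \<Longrightarrow> F \<subseteq> VX \<and> card F = l \<and> (\<exists>v\<in>F. w = Old v)" by (meson G2_sub P1_G1 subsetD)
    have p2: "\<And>j w. {UV j, w} \<in> ?E \<Longrightarrow> \<exists>v\<in>F0. w = Old v" by (meson G2_sub P2_G1 subsetD)
    have p3: "\<And>a b. {Old a, Old b} \<in> ?E \<Longrightarrow> a \<in> VX \<Longrightarrow> {a,b} \<in> EdX \<or> (a \<in> F0 \<and> b \<in> VS)"
      by (meson G2_sub P3_G1[OF gS disj] subsetD)
    show ?thesis by (rule noNewUV[OF gX nX disj F0 l p1 p2 p3 AB])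
  qed
  have sub: "A \<union> B \<subseteq> Old ` VS"
  proof
    fix c assume c: "c \<in> A \<union> B"
    then obtain v where v: "c = Old v" "v \<in> VX \<union> VS" using old by blast
    show "c \<in> Old ` VS"
    proof (rule ccontr)
      assume "c \<notin> Old ` VS"
      then have vX: "v \<in> VX" using v by auto
      show False
      proof (cases "c \<in> A")
        case True
        show False
        proof (rule side[OF gX nX l(1) l(2), of B VS v])
          show "B \<subseteq> Old ` (VX \<union> VS)" using old by blast
          show "card B = t" using AB by simp
          fix b assume "Old b \<in> B"
          then have "{Old v, Old b} \<in> ?E" using AB True v by blast
          then show "{v,b} \<in> EdX" using P3_G2[OF gS disj] vX by blast
        qed
      next
        case False
        then have cB: "c \<in> B" using c by blast
        show False
        proof (rule side[OF gX nX l(1) order_refl, of A VS v])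
          show "A \<subseteq> Old ` (VX \<union> VS)" using old by blast
          show "card A = l" using AB by simp
          fix b assume "Old b \<in> A"
          then have "{Old b, Old v} \<in> ?E" using AB cB v by blast
          then have "{Old v, Old b} \<in> ?E" by (metis insert_commute)
          then show "{v,b} \<in> EdX" using P3_G2[OF gS disj] vX by blast
        qed
      qed
    qed
  qed
  define A' where "A' = {v \<in> VS. Old v \<in> A}"
  define B' where "B' = {v \<in> VS. Old v \<in> B}"
  have AA: "A = Old ` A'" using sub unfolding A'_def by blast
  have BB: "B = Old ` B'" using sub unfolding B'_def by blast
  have "has_Kab VS EdS l t" unfolding has_Kab_def
  proof (intro exI conjI)
    show "A' \<subseteq> VS" "B' \<subseteq> VS" unfolding A'_def B'_def by auto
    show "A' \<inter> B' = {}" using AB unfolding A'_def B'_def by auto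
    show "card A' = l" using AB AA inj by (metis card_image inj_on_subset subset_UNIV)
    show "card B' = t" using AB BB inj by (metis card_image inj_on_subset subset_UNIV)
    show "\<forall>u\<in>A'. \<forall>w\<in>B'. {u, w} \<in> EdS"
    proof (intro ballI)
      fix a b assume "a \<in> A'" "b \<in> B'"
      then have "{Old a, Old b} \<in> ?E" "a \<in> VS" using AB unfolding A'_def B'_def by auto
      then show "{a,b} \<in> EdS" using P4_G2[OF gX F0(1) disj] by blast
    qed
  qed
  then show False using nS by blast
qed



lemma edge_S:
  assumes "graph VX EdX" "F0 \<subseteq> VX" "e \<in> G1_E VX EdX VS EdS F0 l t u" "e \<inter> Old ` VX = {}"
  shows "\<exists>e'\<in>EdS. e = Old ` e'"
proof -
  have ne: "\<And>e'. e' \<in> EdX \<Longrightarrow> Old ` e' \<inter> Old ` VX \<noteq> {}"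
  proof -
    fix e' assume "e' \<in> EdX"
    then have "e' \<subseteq> VX" "card e' = 2" using assms(1) unfolding graph_def by auto
    then obtain a where "a \<in> e'" by fastforce
    then show "Old ` e' \<inter> Old ` VX \<noteq> {}" using \<open>e' \<subseteq> VX\<close> by blast
  qed
  from assms(3) show ?thesis unfolding G1_E_def
  proof (elim UnE)
    assume "e \<in> (\<lambda>e. Old ` e) ` (EdX \<union> EdS)"
    then obtain e' where "e' \<in> EdX \<union> EdS" "e = Old ` e'" by blast
    then show ?thesis using ne assms(4) by blast
  next
    assume "e \<in> {{New F i, Old v} | F i v. F \<subseteq> VX \<and> card F = l \<and> 1 \<le> i \<and> i \<le> t - 1 \<and> v \<in> F}"
    then obtain F i v where "e = {New F i, Old v}" "F \<subseteq> VX" "v \<in> F" by blast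
    then have "Old v \<in> e \<inter> Old ` VX" by blast
    then show ?thesis using assms(4) by blast
  next
    assume "e \<in> {{UV j, Old v} | j v. j < u \<and> v \<in> F0}"
    then obtain j v where "e = {UV j, Old v}" "v \<in> F0" by blast
    then have "Old v \<in> e \<inter> Old ` VX" using assms(2) by blast
    then show ?thesis using assms(4) by blast
  next
    assume "e \<in> {{Old w, Old v} | w v. w \<in> VS \<and> v \<in> F0}"
    then obtain w v where "e = {Old w, Old v}" "v \<in> F0" by blast
    then have "Old v \<in> e \<inter> Old ` VX" using assms(2) by blast
    then show ?thesis using assms(4) by blast
  qed
qed

lemma matching_bound:
  assumes gX: "graph VX EdX" and gS: "graph VS EdS" and F0: "F0 \<subseteq> VX"
    and cX: "card VX = x" and cS: "card VS = 2 * k + 1"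
    and EE: "E \<subseteq> G1_E VX EdX VS EdS F0 l t u"
  shows "\<not> has_matching E (x + k + 1)"
proof
  assume "has_matching E (x + k + 1)"
  then obtain M where M: "M \<subseteq> E" "finite M" "card M = x + k + 1" "pairwise disjnt M"
    unfolding has_matching_def by blast
  have finX: "finite VX" using gX unfolding graph_def by blast
  have finS: "finite VS" using gS unfolding graph_def by blast
  define M1 where "M1 = {e \<in> M. e \<inter> Old ` VX \<noteq> {}}"
  define M2 where "M2 = M - M1"
  define f where "f e = (SOME v. v \<in> VX \<and> Old v \<in> e)" for e
  have fP: "f e \<in> VX \<and> Old (f e) \<in> e" if "e \<in> M1" for e
  proof -
    have "\<exists>v. v \<in> VX \<and> Old v \<in> e" using that unfolding M1_def by blast
    then show ?thesis unfolding f_def by (rule someI_ex)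
  qed
  have "inj_on f M1"
  proof
    fix e1 e2 assume e: "e1 \<in> M1" "e2 \<in> M1" "f e1 = f e2"
    have "Old (f e1) \<in> e1" "Old (f e1) \<in> e2" using fP e by (metis, metis)
    then have "\<not> disjnt e1 e2" unfolding disjnt_def by blast
    then show "e1 = e2" using M(4) e unfolding M1_def pairwise_def by blast
  qed
  then have c1: "card M1 \<le> x" using card_inj_on_le[of f M1 VX] fP finX cX by blast
  have M2S: "\<exists>e'\<in>EdS. e = Old ` e'" if "e \<in> M2" for e
  proof (rule edge_S[OF gX F0])
    show "e \<in> G1_E VX EdX VS EdS F0 l t u" using that M(1) EE unfolding M2_def by blast
    show "e \<inter> Old ` VX = {}" using that unfolding M2_def M1_def by blast
  qed
  have inj: "inj Old" by (simp add: inj_def)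
  have e2: "\<And>e. e \<in> M2 \<Longrightarrow> card e = 2 \<and> e \<subseteq> Old ` VS"
  proof -
    fix e assume "e \<in> M2"
    then obtain e' where "e' \<in> EdS" "e = Old ` e'" using M2S by blast
    moreover have "card e' = 2" "e' \<subseteq> VS" using gS \<open>e' \<in> EdS\<close> unfolding graph_def by auto
    ultimately show "card e = 2 \<and> e \<subseteq> Old ` VS" using inj by (metis card_image inj_on_subset subset_UNIV image_mono)
  qed
  have finM2: "finite M2" using M unfolding M2_def by blast
  have "card (\<Union>M2) = (\<Sum>e\<in>M2. card e)"
  proof (rule card_Union_disjoint)
    show "pairwise disjnt M2" using M(4) unfolding M2_def by (meson Diff_subset pairwise_subset)
    show "\<And>e. e \<in> M2 \<Longrightarrow> finite e" using e2 by (metis card.infinite zero_neq_numeral)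
  qed
  also have "\<dots> = 2 * card M2" using e2 by simp
  finally have "2 * card M2 = card (\<Union>M2)" by simp
  also have "\<dots> \<le> card (Old ` VS)" using e2 finS by (intro card_mono) auto
  also have "\<dots> \<le> 2 * k + 1" using cS card_image_le finS by metis
  finally have c2: "card M2 \<le> k" by simp
  have "M = M1 \<union> M2" "M1 \<inter> M2 = {}" "finite M1" unfolding M2_def M1_def using M(2) by auto
  then have "card M = card M1 + card M2" using finM2 by (metis card_Un_disjoint)
  then show False using c1 c2 M by simp
qed


theorem lemma2p5:
  fixes l t s x n :: nat
    and VX VS F0 :: "'a set" and EdX EdS :: "'a set set"
  assumes "2 \<le> l" "l \<le> t" "s \<ge> l + 1" "n \<ge> 2 * s + 1" "x \<le> s" "l \<le> x"
    and "n \<ge> x + (t - 1) * (x choose l) + 2 * (s - x) + 1"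
    and "graph VX EdX" "card VX = x" "\<not> has_Kab VX EdX 1 l" "card EdX = ex_Kab x 1 l"
    and "graph VS EdS" "card VS = 2 * (s - x) + 1" "\<not> has_Kab VS EdS l t"
    and "card EdS = ex_Kab (2 * (s - x) + 1) l t"
    and "VX \<inter> VS = {}"
    and "F0 \<subseteq> VX" "card F0 = l - 1"
  defines "u \<equiv> n - x - (t - 1) * (x choose l) - 2 * (s - x) - 1"
  shows "(2 * (s - x) + 1 \<le> t \<longrightarrow>
            \<not> has_Kab (G1_V VX VS l t u) (G1_E VX EdX VS EdS F0 l t u) l t
          \<and> \<not> has_matching (G1_E VX EdX VS EdS F0 l t u) (s + 1))
       \<and> (2 * (s - x) + 1 \<ge> t + 1 \<longrightarrow>
            \<not> has_Kab (G1_V VX VS l t u) (G2_E VX EdX VS EdS F0 l t u) l t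
          \<and> \<not> has_matching (G2_E VX EdX VS EdS F0 l t u) (s + 1))"
proof -
  have m: "x + (s - x) + 1 = s + 1" using assms(5) by simp
  have M1: "\<not> has_matching (G1_E VX EdX VS EdS F0 l t u) (s + 1)"
    using matching_bound[OF assms(8,12,17,9,13) order_refl] m by metis
  have M2: "\<not> has_matching (G2_E VX EdX VS EdS F0 l t u) (s + 1)"
    using matching_bound[OF assms(8,12,17,9,13) G2_sub] m by metis
  have K1: "2 * (s - x) + 1 \<le> t \<Longrightarrow> \<not> has_Kab (G1_V VX VS l t u) (G1_E VX EdX VS EdS F0 l t u) l t"
    using caseI[OF assms(8,10,16,12,17,18,1,2)] assms(13) by simp
  have K2: "\<not> has_Kab (G1_V VX VS l t u) (G2_E VX EdX VS EdS F0 l t u) l t"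
    using caseII[OF assms(8,10,16,12,14,17,18,1,2)] by simp
  show ?thesis using M1 M2 K1 K2 by blast
qed

end
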